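(* Let $w:[0,\infty)\to\mathbb R$ be twice differentiable and suppose the following hold: - $c_T=\inf_{t\in[0,T]}|w'_t|>0$ for every $T>0$; - $w''/(w')^2\in L^1_{loc}(0,+\infty)$. Then $w$ is $(1-\gamma,\gamma)$-irregular for every $\gamma\in(0,1)$.
   Context: For continuous $w$ set $\Phi^w_{s,t}(a)=\int_s^te^{iaw_r}\,dr$ and $\langle a\rangle=(1+a^2)^{1/2}$. For $\rho,\gamma>0$, $w$ is called $(\rho,\gamma)$-irregular if, for every $T>0$, $$\sup_{a\in\mathbb R}\,\sup_{0\le s<t\le T}\langle a\rangle^\rho\frac{|\Phi^w_{s,t}(a)|}{|t-s|^\gamma}<\infty.$$ *)

theory Defs
  imports "HOL-Analysis.Analysis"
begin

definition jbracket :: "real \<Rightarrow> real" where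
  "jbracket a = sqrt (1 + a\<^sup>2)"

definition Phi :: "(real \<Rightarrow> real) \<Rightarrow> real \<Rightarrow> real \<Rightarrow> real \<Rightarrow> complex" where
  "Phi w s t a = integral {s..t} (\<lambda>r. exp (\<i> * complex_of_real (a * w r)))"

text \<open>(rho,gamma)-irregularity: for every T > 0 the supremum over a and 0 <= s < t <= T
  is finite (the quantities are nonnegative, so finiteness = bounded above).\<close>
definition irregular :: "(real \<Rightarrow> real) \<Rightarrow> real \<Rightarrow> real \<Rightarrow> bool" where
  "irregular w \<rho> \<gamma> \<longleftrightarrow> \<rho> > 0 \<and> \<gamma> > 0 \<and>
     (\<forall>T>0. bdd_above {jbracket a powr \<rho> * norm (Phi w s t a) / (t - s) powr \<gamma> |
                          a s t. 0 \<le> s \<and> s < t \<and> t \<le> T})"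

end

theory Submission
  imports Defs
begin

lemma dE:
  fixes w :: "real \<Rightarrow> real"
  assumes "(w has_real_derivative d) (at r within S)"
  shows "((\<lambda>r. exp (\<i> * complex_of_real (a * w r))) has_vector_derivative
           (\<i> * complex_of_real (a * d)) * exp (\<i> * complex_of_real (a * w r))) (at r within S)"
proof -
  have 1: "((\<lambda>r. \<i> * complex_of_real (a * w r)) has_vector_derivative (\<i> * complex_of_real (a * d))) (at r within S)"
    by (auto intro!: derivative_eq_intros assms)
  show ?thesis
    using field_vector_diff_chain_within[OF 1, of exp "exp (\<i> * complex_of_real (a * w r))"]
    by (auto simp: o_def intro: DERIV_subset[OF DERIV_exp])
qed

lemma key:
  fixes w w' w'' :: "real \<Rightarrow> real"
  assumes st: "s \<le> t"
    and dw: "\<And>r. r \<in> {s..t} \<Longrightarrow> (w has_real_derivative w' r) (at r within {s..t})"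
    and dw': "\<And>r. r \<in> {s..t} \<Longrightarrow> (w' has_real_derivative w'' r) (at r within {s..t})"
    and c: "c > 0" "\<And>r. r \<in> {s..t} \<Longrightarrow> c \<le> \<bar>w' r\<bar>"
    and int: "(\<lambda>r. \<bar>w'' r / (w' r)\<^sup>2\<bar>) integrable_on {s..t}"
    and a: "a \<noteq> 0"
  shows "norm (Phi w s t a) \<le> (2/c + integral {s..t} (\<lambda>r. \<bar>w'' r / (w' r)\<^sup>2\<bar>)) / \<bar>a\<bar>"
proof -
  define E where "E r = exp (\<i> * complex_of_real (a * w r))" for r
  define h where "h r = w'' r / (w' r)\<^sup>2" for r
  define F where "F r = E r * complex_of_real (1 / w' r) / (\<i> * complex_of_real a)" for r
  define G where "G r = E r * complex_of_real (h r) / (\<i> * complex_of_real a)" for r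
  have nz: "w' r \<noteq> 0" if "r \<in> {s..t}" for r using c that by force
  have dF: "(F has_vector_derivative (E r - G r)) (at r within {s..t})" if r: "r \<in> {s..t}" for r
  proof -
    have e: "(E has_vector_derivative (\<i> * complex_of_real (a * w' r)) * E r) (at r within {s..t})"
      unfolding E_def by (rule dE[OF dw[OF r]])
    have u: "((\<lambda>r. 1 / w' r) has_real_derivative (- w'' r / (w' r)\<^sup>2)) (at r within {s..t})"
      using dw'[OF r] nz[OF r] by (auto intro!: derivative_eq_intros simp: power2_eq_square)
    have u': "((\<lambda>r. complex_of_real (1 / w' r)) has_vector_derivative complex_of_real (- w'' r / (w' r)\<^sup>2)) (at r within {s..t})"
      by (rule has_vector_derivative_of_real[OF u])
    have p: "((\<lambda>r. E r * complex_of_real (1 / w' r)) has_vector_derivative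
        (E r * complex_of_real (- w'' r / (w' r)\<^sup>2) + (\<i> * complex_of_real (a * w' r)) * E r * complex_of_real (1 / w' r))) (at r within {s..t})"
      by (rule has_vector_derivative_mult[OF e u'])
    have q: "((\<lambda>r. E r * complex_of_real (1 / w' r) / (\<i> * complex_of_real a)) has_vector_derivative
        (E r * complex_of_real (- w'' r / (w' r)\<^sup>2) + (\<i> * complex_of_real (a * w' r)) * E r * complex_of_real (1 / w' r)) / (\<i> * complex_of_real a)) (at r within {s..t})"
      using has_vector_derivative_divide[OF p] by simp
    have eq: "(E r * complex_of_real (- w'' r / (w' r)\<^sup>2) + (\<i> * complex_of_real (a * w' r)) * E r * complex_of_real (1 / w' r)) / (\<i> * complex_of_real a) = E r - G r"
      using nz[OF r] a by (simp add: G_def h_def field_simps)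
    show ?thesis using q unfolding eq F_def .
  qed
  have ftc: "((\<lambda>r. E r - G r) has_integral (F t - F s)) {s..t}"
    by (rule fundamental_theorem_of_calculus[OF st dF])
  have contE: "continuous_on {s..t} E"
    using dE[OF dw] unfolding E_def
    by (meson continuous_on_eq_continuous_within has_vector_derivative_continuous)
  have Eint: "(E has_integral Phi w s t a) {s..t}"
    unfolding Phi_def E_def[symmetric] using integrable_continuous_interval[OF contE] by blast
  have Gint: "(G has_integral (Phi w s t a - (F t - F s))) {s..t}"
    using has_integral_diff[OF Eint ftc] by simp
  have hint: "(\<lambda>r. \<bar>h r\<bar> / \<bar>a\<bar>) integrable_on {s..t}"
    using int unfolding h_def by (intro integrable_on_divide) 
  have Gb: "norm (Phi w s t a - (F t - F s)) \<le> integral {s..t} (\<lambda>r. \<bar>h r\<bar> / \<bar>a\<bar>)"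
  proof -
    have "norm (integral {s..t} G) \<le> integral {s..t} (\<lambda>r. \<bar>h r\<bar> / \<bar>a\<bar>)"
      apply (rule integral_norm_bound_integral)
      using Gint hint apply (auto simp: G_def E_def norm_mult norm_divide)
      done
    then show ?thesis using Gint by (simp add: integral_unique)
  qed
  have Fb: "norm (F r) \<le> 1 / (c * \<bar>a\<bar>)" if r: "r \<in> {s..t}" for r
  proof -
    have "norm (F r) = 1 / (\<bar>w' r\<bar> * \<bar>a\<bar>)"
      using nz[OF r] by (simp add: F_def E_def norm_mult norm_divide)
    also have "\<dots> \<le> 1 / (c * \<bar>a\<bar>)"
      using c r a nz[OF r] by (intro divide_left_mono mult_right_mono mult_pos_pos) auto
    finally show ?thesis .
  qed
  have "norm (Phi w s t a) \<le> norm (Phi w s t a - (F t - F s)) + norm (F t) + norm (F s)"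
    by (smt (verit) norm_triangle_ineq4 norm_triangle_sub)
  also have "\<dots> \<le> integral {s..t} (\<lambda>r. \<bar>h r\<bar> / \<bar>a\<bar>) + 1 / (c * \<bar>a\<bar>) + 1 / (c * \<bar>a\<bar>)"
    using Gb Fb[of t] Fb[of s] st by auto
  also have "\<dots> = (2/c + integral {s..t} (\<lambda>r. \<bar>w'' r / (w' r)\<^sup>2\<bar>)) / \<bar>a\<bar>"
    unfolding integral_divide h_def using c a by (simp add: field_simps del: integral_divide)
  finally show ?thesis .
qed
lemma ineq:
  fixes a d T P K g :: real
  assumes g: "0 < g" "g < 1" and d: "0 < d" "d \<le> T" and P: "0 \<le> P" "P \<le> d" and K: "K > 0"
    and aP: "a \<noteq> 0 \<Longrightarrow> P * \<bar>a\<bar> \<le> K"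
  shows "sqrt (1 + a\<^sup>2) powr (1 - g) * P / d powr g \<le> 2 * T powr (1 - g) + (2 * K) powr (1 - g)"
proof -
  define j where "j = sqrt (1 + a\<^sup>2)"
  have j1: "j \<ge> 1" unfolding j_def by simp
  have dg: "d powr g > 0" using d by simp
  have split: "P = P powr g * P powr (1 - g)" if "P > 0"
    using that by (simp add: powr_add[symmetric])
  have ds: "d = d powr g * d powr (1 - g)"
    using d by (simp add: powr_add[symmetric])
  show ?thesis
  proof (cases "\<bar>a\<bar> \<le> 1")
    case True
    have "a\<^sup>2 \<le> 1" using True by (simp add: abs_square_le_1)
    then have "j \<le> 2" unfolding j_def
      by (intro real_le_lsqrt) auto
    then have "j powr (1 - g) \<le> 2 powr (1 - g)" using g j1 by (intro powr_mono2) auto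
    also have "\<dots> \<le> 2 powr 1" using g by (intro powr_mono) auto
    finally have jb: "j powr (1 - g) \<le> 2" by simp
    have "P / d powr g \<le> d / d powr g" using P dg by (simp add: divide_right_mono)
    also have "\<dots> = d powr (1 - g)" using dg by (subst ds) simp
    also have "\<dots> \<le> T powr (1 - g)" using d g by (intro powr_mono2) auto
    finally have pb: "P / d powr g \<le> T powr (1 - g)" .
    have "j powr (1 - g) * P / d powr g = j powr (1 - g) * (P / d powr g)" by simp
    also have "\<dots> \<le> 2 * T powr (1 - g)"
      using jb pb P dg by (intro mult_mono) auto
    also have "\<dots> \<le> 2 * T powr (1 - g) + (2 * K) powr (1 - g)" by simp
    finally show ?thesis unfolding j_def .
  next
    case False
    then have a0: "a \<noteq> 0" by auto
    show ?thesis
    proof (cases "P = 0")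
      case True then show ?thesis by simp
    next
      case False
      then have Pp: "P > 0" using P by simp
      have "j \<le> 2 * \<bar>a\<bar>" unfolding j_def
        using \<open>\<not> \<bar>a\<bar> \<le> 1\<close>
        by (intro real_le_lsqrt) (auto simp: power_mult_distrib power2_eq_square abs_square_le_1[symmetric]
             abs_le_square_iff[symmetric])
      then have jb: "j powr (1 - g) \<le> (2 * \<bar>a\<bar>) powr (1 - g)"
        using g j1 by (intro powr_mono2) auto
      have p1: "P powr g \<le> d powr g" using P g by (intro powr_mono2) auto
      have p2: "P powr (1 - g) \<le> (K / \<bar>a\<bar>) powr (1 - g)"
        using P g aP[OF a0] a0 by (intro powr_mono2) (auto simp: field_simps)
      have "j powr (1 - g) * P / d powr g = j powr (1 - g) * P powr (1 - g) * (P powr g / d powr g)"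
        by (subst split[OF Pp]) simp
      also have "\<dots> \<le> ((2 * \<bar>a\<bar>) powr (1 - g) * (K / \<bar>a\<bar>) powr (1 - g)) * 1"
        using jb p1 p2 dg by (intro mult_mono) auto
      also have "\<dots> = (2 * K) powr (1 - g)"
        using a0 K by (simp add: powr_mult[symmetric])
      also have "\<dots> \<le> 2 * T powr (1 - g) + (2 * K) powr (1 - g)" by simp
      finally show ?thesis unfolding j_def .
    qed
  qed
qed

theorem mainTheorem3:
  fixes w w' w'' :: "real \<Rightarrow> real"
  assumes d1: "\<And>t. t \<ge> 0 \<Longrightarrow> (w has_real_derivative w' t) (at t within {0..})"
    and d2: "\<And>t. t \<ge> 0 \<Longrightarrow> (w' has_real_derivative w'' t) (at t within {0..})"
    and cT: "\<And>T. T > 0 \<Longrightarrow> (INF t\<in>{0..T}. \<bar>w' t\<bar>) > 0"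
    and L1: "\<And>T. T > 0 \<Longrightarrow> set_integrable lborel {0..T} (\<lambda>t. w'' t / (w' t)\<^sup>2)"
  shows "\<forall>\<gamma>. 0 < \<gamma> \<and> \<gamma> < 1 \<longrightarrow> irregular w (1 - \<gamma>) \<gamma>"
proof (intro allI impI)
  fix g :: real
  assume g: "0 < g \<and> g < 1"
  show "irregular w (1 - g) g"
    unfolding irregular_def
  proof (intro conjI allI impI)
    show "0 < 1 - g" "0 < g" using g by auto
    fix T :: real
    assume T: "T > 0"
    define c where "c = (INF t\<in>{0..T}. \<bar>w' t\<bar>)"
    have c0: "c > 0" using cT[OF T] c_def by simp
    have cle: "c \<le> \<bar>w' r\<bar>" if "r \<in> {0..T}" for r
      unfolding c_def by (rule cINF_lower[OF _ that]) (auto intro: bdd_belowI[of _ 0])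
    have iT: "(\<lambda>r. \<bar>w'' r / (w' r)\<^sup>2\<bar>) integrable_on {0..T}"
      using set_borel_integral_eq_integral(1)[OF set_integrable_abs[OF L1[OF T]]] .
    define K where "K = 2 / c + integral {0..T} (\<lambda>r. \<bar>w'' r / (w' r)\<^sup>2\<bar>)"
    have Ipos: "integral {0..T} (\<lambda>r. \<bar>w'' r / (w' r)\<^sup>2\<bar>) \<ge> 0"
      by (rule integral_nonneg[OF iT]) auto
    have K0: "K > 0" unfolding K_def using c0 Ipos
      by (smt (verit, best) divide_pos_pos)
    show "bdd_above {jbracket a powr (1 - g) * norm (Phi w s t a) / (t - s) powr g |
                          a s t. 0 \<le> s \<and> s < t \<and> t \<le> T}"
    proof (rule bdd_aboveI[where M = "2 * T powr (1 - g) + (2 * K) powr (1 - g)"], clarify)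
      fix a s t :: real
      assume st: "0 \<le> s" "s < t" "t \<le> T"
      have sub: "{s..t} \<subseteq> {0..T}" using st by auto
      have ist: "(\<lambda>r. \<bar>w'' r / (w' r)\<^sup>2\<bar>) integrable_on {s..t}"
        by (rule integrable_on_subinterval[OF iT sub])
      have Ile: "integral {s..t} (\<lambda>r. \<bar>w'' r / (w' r)\<^sup>2\<bar>) \<le> integral {0..T} (\<lambda>r. \<bar>w'' r / (w' r)\<^sup>2\<bar>)"
        by (rule integral_subset_le[OF sub ist iT]) auto
      have P0: "norm (Phi w s t a) \<le> t - s"
      proof -
        have cont: "continuous_on {s..t} (\<lambda>r. exp (\<i> * complex_of_real (a * w r)))"
        proof -
          have "((\<lambda>r. exp (\<i> * complex_of_real (a * w r))) has_vector_derivative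
             (\<i> * complex_of_real (a * w' r)) * exp (\<i> * complex_of_real (a * w r))) (at r within {s..t})"
            if "r \<in> {s..t}" for r
            using that st by (intro dE DERIV_subset[OF d1]) auto
          then show ?thesis
            by (meson continuous_on_eq_continuous_within has_vector_derivative_continuous)
        qed
        have "norm (Phi w s t a) \<le> integral {s..t} (\<lambda>r. 1::real)"
          unfolding Phi_def
          by (rule integral_norm_bound_integral[OF integrable_continuous_interval[OF cont]]) auto
        then show ?thesis using st by simp
      qed
      have aP: "norm (Phi w s t a) * \<bar>a\<bar> \<le> K" if a: "a \<noteq> 0"
      proof -
        have "norm (Phi w s t a) \<le> (2/c + integral {s..t} (\<lambda>r. \<bar>w'' r / (w' r)\<^sup>2\<bar>)) / \<bar>a\<bar>"
          apply (rule key[OF _ _ _ c0 _ ist a])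
          using st sub cle DERIV_subset[OF d1] DERIV_subset[OF d2] by auto
        also have "\<dots> \<le> K / \<bar>a\<bar>" unfolding K_def using Ile a by (intro divide_right_mono) auto
        finally show ?thesis using a by (simp add: field_simps)
      qed
      show "jbracket a powr (1 - g) * norm (Phi w s t a) / (t - s) powr g
            \<le> 2 * T powr (1 - g) + (2 * K) powr (1 - g)"
        unfolding jbracket_def
        by (rule ineq) (use g st P0 aP K0 in auto)
    qed
  qed
qed

end
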